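(* Let $(X,\alpha,T)$ be a dynamical system, $T$ a semigroup with identity acting on a compact metrizable space $X$ by continuous surjections, and let $T=T_1\cup\cdots\cup T_k$ be a decomposition into finitely many subsemigroups. If each $E(X,T_i)$ is completely regular, then $E(X,T)$ is completely regular.
   Context: $E(X,S)$ for $S\subset T$ denotes the closure of $\{\alpha^t:t\in S\}$ in $X^X$ with the topology of pointwise convergence; these are semigroups under composition. A semigroup is completely regular if each element $a$ admits $x$ with $a=axa$, $ax=xa$. *)

theory Defs
  imports "HOL-Analysis.Analysis"
begin

text \<open>Enveloping semigroup E(X,S): closure of the maps alpha t (t in S) in X^X,
  where the function space carries the product topology (= pointwise convergence),
  which is the topology instance on type fun from Function_Topology.\<close>
definition enveloping :: "('t \<Rightarrow> 'x \<Rightarrow> 'x::topological_space) \<Rightarrow> 't set \<Rightarrow> ('x \<Rightarrow> 'x) set" where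
  "enveloping \<alpha> S = closure (\<alpha> ` S)"

definition completely_regular :: "('x \<Rightarrow> 'x) set \<Rightarrow> bool" where
  "completely_regular E \<longleftrightarrow> (\<forall>a\<in>E. \<exists>x\<in>E. a = a \<circ> x \<circ> a \<and> a \<circ> x = x \<circ> a)"

definition subsemigroup :: "'t::semigroup_mult set \<Rightarrow> bool" where
  "subsemigroup S \<longleftrightarrow> (\<forall>a\<in>S. \<forall>b\<in>S. a * b \<in> S)"

end

theory Submission
  imports Defs
begin

lemma closure_UN_lessThan:
  "closure (\<Union>i<(k::nat). A i) = (\<Union>i<k. closure (A i))"
  by (induction k) (auto simp: lessThan_Suc)

theorem corollary3p3:
  fixes \<alpha> :: "'t::monoid_mult \<Rightarrow> 'x::metric_space \<Rightarrow> 'x"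
    and Ts :: "nat \<Rightarrow> 't set" and k :: nat
  assumes "compact (UNIV :: 'x set)"
    and "\<alpha> 1 = id"
    and "\<And>s t. \<alpha> (s * t) = \<alpha> s \<circ> \<alpha> t"
    and "\<And>t. continuous_on UNIV (\<alpha> t)"
    and "\<And>t. surj (\<alpha> t)"
    and "\<And>i. i < k \<Longrightarrow> subsemigroup (Ts i)"
    and "(\<Union>i<k. Ts i) = UNIV"
    and "\<And>i. i < k \<Longrightarrow> completely_regular (enveloping \<alpha> (Ts i))"
  shows "completely_regular (enveloping \<alpha> UNIV)"
proof -
  have eq: "enveloping \<alpha> UNIV = (\<Union>i<k. enveloping \<alpha> (Ts i))"
  proof -
    have "\<alpha> ` UNIV = (\<Union>i<k. \<alpha> ` Ts i)" using assms(7) by blast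
    then show ?thesis unfolding enveloping_def by (simp add: closure_UN_lessThan)
  qed
  show ?thesis
    unfolding completely_regular_def
  proof
    fix a assume "a \<in> enveloping \<alpha> UNIV"
    then obtain i where i: "i < k" "a \<in> enveloping \<alpha> (Ts i)" using eq by auto
    then obtain x where "x \<in> enveloping \<alpha> (Ts i)" "a = a \<circ> x \<circ> a \<and> a \<circ> x = x \<circ> a"
      using assms(8) unfolding completely_regular_def by blast
    then show "\<exists>x\<in>enveloping \<alpha> UNIV. a = a \<circ> x \<circ> a \<and> a \<circ> x = x \<circ> a"
      using i eq by blast
  qed
qed

end
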